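(* Let $n\ge 2$. Then $$\max_{\pi}\ \min_{1\le i\le n-1}|\pi_{i+1}-\pi_i| = \lfloor n/2\rfloor,$$ where the maximum is over all permutations $\pi=(\pi_1,\ldots,\pi_n)$ of $\{1,\ldots,n\}$. *)

theory Defs
  imports "HOL-Combinatorics.Permutations"
begin

definition min_gap :: "nat \<Rightarrow> (nat \<Rightarrow> nat) \<Rightarrow> int" where
  "min_gap n \<pi> = Min {\<bar>int (\<pi> (i+1)) - int (\<pi> i)\<bar> | i. 1 \<le> i \<and> i \<le> n - 1}"

end

theory Submission
  imports Defs
begin

definition pz :: "nat \<Rightarrow> nat \<Rightarrow> nat" where
  "pz n i = (if i \<in> {1..n} then (if odd i then n div 2 + (i+1) div 2 else i div 2) else i)"

lemma pz_permutes: "pz n permutes {1..n}"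
proof -
  have sub: "pz n ` {1..n} \<subseteq> {1..n}"
    by (auto simp: pz_def elim!: oddE)
  have inj: "inj_on (pz n) {1..n}"
  proof (rule inj_onI)
    fix x y assume x: "x \<in> {1..n}" and y: "y \<in> {1..n}" and e: "pz n x = pz n y"
    show "x = y"
    proof (cases "odd x"; cases "odd y")
      assume "odd x" "odd y" thus ?thesis using e x y by (auto simp: pz_def elim!: oddE)
    next
      assume "odd x" "\<not> odd y" thus ?thesis using e x y by (auto simp: pz_def elim!: oddE evenE)
    next
      assume "\<not> odd x" "odd y" thus ?thesis using e x y by (auto simp: pz_def elim!: oddE evenE)
    next
      assume "\<not> odd x" "\<not> odd y" thus ?thesis using e x y by (auto simp: pz_def elim!: evenE)
    qed
  qed
  have "pz n ` {1..n} = {1..n}" using endo_inj_surj[OF _ sub inj] by simp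
  hence "bij_betw (pz n) {1..n} {1..n}" using inj by (simp add: bij_betw_def)
  moreover have "\<And>x. x \<notin> {1..n} \<Longrightarrow> pz n x = x" unfolding pz_def by presburger
  ultimately show ?thesis using bij_imp_permutes by blast
qed

lemma gapset: "{\<bar>int (\<pi> (i+1)) - int (\<pi> i)\<bar> | i. 1 \<le> i \<and> i \<le> n - 1}
   = (\<lambda>i. \<bar>int (\<pi> (i+1)) - int (\<pi> i)\<bar>) ` {1..n-1}"
  by auto

lemma upper:
  assumes n: "n \<ge> 2" and p: "\<pi> permutes {1..n}"
  shows "min_gap n \<pi> \<le> int (n div 2)"
proof -
  define v where "v = (n+1) div 2"
  have v: "v \<in> {1..n}" using n by (auto simp: v_def)
  obtain q where q: "q \<in> {1..n}" "\<pi> q = v"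
    using p v by (metis permutes_def permutes_in_image)
  have rng: "\<And>x. x \<in> {1..n} \<Longrightarrow> \<pi> x \<in> {1..n}" by (rule iffD2[OF permutes_in_image[OF p]])
  have bnd: "\<And>w. w \<in> {1..n} \<Longrightarrow> \<bar>int w - int v\<bar> \<le> int (n div 2)"
    by (auto simp: v_def)
  obtain i where i: "1 \<le> i" "i \<le> n - 1" "\<bar>int (\<pi> (i+1)) - int (\<pi> i)\<bar> \<le> int (n div 2)"
  proof (cases "q < n")
    case True
    have "\<bar>int (\<pi> (q+1)) - int (\<pi> q)\<bar> \<le> int (n div 2)"
      using bnd[OF rng[of "q+1"]] True q by auto
    thus ?thesis using that[of q] q True by auto
  next
    case False
    hence qn: "q = n" using q by auto
    have "\<bar>int (\<pi> ((q-1)+1)) - int (\<pi> (q-1))\<bar> \<le> int (n div 2)"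
    proof -
      have e: "q-1+1 = q" using qn n by simp
      have "\<bar>int (\<pi> (q-1)) - int v\<bar> \<le> int (n div 2)" using bnd[OF rng[of "q-1"]] qn n by auto
      thus ?thesis unfolding e using q(2) by (simp add: abs_minus_commute)
    qed
    thus ?thesis using that[of "q-1"] qn n by auto
  qed
  show ?thesis unfolding min_gap_def gapset
    using i by (intro Min.coboundedI[THEN order_trans]) auto
qed

lemma lower:
  assumes n: "n \<ge> 2"
  shows "min_gap n (pz n) \<ge> int (n div 2)"
proof -
  have "\<And>i. i \<in> {1..n-1} \<Longrightarrow> \<bar>int (pz n (i+1)) - int (pz n i)\<bar> \<ge> int (n div 2)"
  proof -
    fix i assume i: "i \<in> {1..n-1}"
    hence "i \<in> {1..n}" "i+1 \<in> {1..n}" by auto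
    thus "\<bar>int (pz n (i+1)) - int (pz n i)\<bar> \<ge> int (n div 2)"
      by (cases "odd i") (auto simp: pz_def elim!: oddE evenE)
  qed
  moreover have "{1..n-1} \<noteq> {}" using n by auto
  ultimately show ?thesis unfolding min_gap_def gapset
    by (simp add: Min_ge_iff)
qed

theorem theorem4p1:
  fixes n :: nat
  assumes "n \<ge> 2"
  shows "Max {min_gap n \<pi> | \<pi>. \<pi> permutes {1..n}} = int (n div 2)"
proof (rule Max_eqI)
  have "{min_gap n \<pi> | \<pi>. \<pi> permutes {1..n}} = min_gap n ` {\<pi>. \<pi> permutes {1..n}}" by auto
  thus "finite {min_gap n \<pi> | \<pi>. \<pi> permutes {1..n}}"
    using finite_permutations[of "{1..n}"] by simp
next
  fix y assume "y \<in> {min_gap n \<pi> | \<pi>. \<pi> permutes {1..n}}"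
  thus "y \<le> int (n div 2)" using upper[OF assms] by auto
next
  have "min_gap n (pz n) = int (n div 2)"
    using upper[OF assms pz_permutes] lower[OF assms] by simp
  thus "int (n div 2) \<in> {min_gap n \<pi> | \<pi>. \<pi> permutes {1..n}}"
    using pz_permutes by force
qed

end
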